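(* Consider a network as described in the context that is cooperative and large enough. Then for every initial state $\mathbf x(0)$ with $S_i(x_i(0))\in[0,\theta_i)$ for all $i$, the grand coalition is exhibited infinitely many times in the future. That is, there are infinitely many spiking instants $t_n$ with $I(t_n)=\{1,\dots,m\}$.
   Context: Network model. Fix an integer $m\ge 2$ (the number of units, or cells). For each $i\in\{1,\dots,m\}$ the following data are given. - $X_i$ is a compact finite-dimensional smooth manifold. - $f_i$ is a continuous vector field on $X_i$. - $S_i:X_i\to\mathbb R$ is a $C^1$ function, called the satisfaction level. - $\theta_i>0$ is a constant, called the goal. These are required to satisfy: there is $v_i>0$ with $\nabla S_i(x)\cdot f_i(x)>v_i$ for every $x\in X_i$ with $S_i(x)<\theta_i$. Real interaction weights $\Delta_{ij}$ are given for $i\ne j$. The global state $\mathbf x(t)=(x_1(t),\dots,x_m(t))\in\prod_i X_i$, $t\ge 0$, evolves as follows. Spiking instants $0\le t_0<t_1<\cdots$ are the instants at which at least one cell spikes. Between consecutive spiking instants each $x_i$ evolves independently by $dx_i/dt=f_i(x_i)$. At an instant $t_n$, write $S_j(x_j(t_n^-))=\lim_{t\to t_n^-}S_j(x_j(t))$. The coalition is $I(t_n)=\bigcup_{p\ge 0}I_p(t_n)$, where: - $I_0(t_n)$ is the set of cells $i$ with $S_i(x_i(t_n^-))\ge\theta_i$; - for $p\ge1$, $I_p(t_n)$ is the set of cells $j\notin\bigcup_{k<p}I_k(t_n)$ with $S_j(x_j(t_n^-))+\sum_{k<p}\sum_{i\in I_k(t_n)}\Delta_{ij}\ge\theta_j$.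 The spiking instants are exactly the instants with $I_0(t_n)\neq\emptyset$, and the cells in $I(t_n)$ are said to spike at $t_n$. At $t_n$ the state jumps as follows: - for $j\in I(t_n)$, $x_j(t_n)$ is a point with $S_j(x_j(t_n))=0$; - for $j\notin I(t_n)$, $x_j(t_n)$ is a point with $S_j(x_j(t_n))=S_j(x_j(t_n^-))+\sum_{i\in I(t_n),\,i\ne j}\Delta_{ij}$. Initial states are assumed to satisfy $S_i(x_i(0))\in[0,\theta_i)$ for all $i$. The network is cooperative if $\Delta_{ij}\ge 0$ for all $i\ne j$. A cooperative network is large enough if $\sqrt m\ge 1+\frac{\max_i\theta_i}{\min_{i\ne j}\Delta_{ij}}$; in particular this requires $\Delta_{ij}>0$ for all $i\ne j$. The grand coalition is exhibited at $t_n$ if $I(t_n)=\{1,\dots,m\}$. *)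

theory Defs
  imports "HOL-Analysis.Analysis"
begin

text \<open>Cells are indexed by the finite set C (in the theorem C = {1..m}).
  s j is the left-limit satisfaction level of cell j at the current instant,
  th j the goal of cell j, D i j the interaction weight from i to j.\<close>

definition next_layer ::
  "nat set \<Rightarrow> (nat \<Rightarrow> real) \<Rightarrow> (nat \<Rightarrow> nat \<Rightarrow> real) \<Rightarrow> (nat \<Rightarrow> real) \<Rightarrow> nat set list \<Rightarrow> nat set" where
  "next_layer C th D s ls =
     {j \<in> C. j \<notin> \<Union>(set ls) \<and> s j + (\<Sum>k<length ls. \<Sum>i\<in>ls ! k. D i j) \<ge> th j}"

fun layers ::
  "nat set \<Rightarrow> (nat \<Rightarrow> real) \<Rightarrow> (nat \<Rightarrow> nat \<Rightarrow> real) \<Rightarrow> (nat \<Rightarrow> real) \<Rightarrow> nat \<Rightarrow> nat set list" where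
  "layers C th D s 0 = [next_layer C th D s []]"
| "layers C th D s (Suc p) = layers C th D s p @ [next_layer C th D s (layers C th D s p)]"

definition layer ::
  "nat set \<Rightarrow> (nat \<Rightarrow> real) \<Rightarrow> (nat \<Rightarrow> nat \<Rightarrow> real) \<Rightarrow> (nat \<Rightarrow> real) \<Rightarrow> nat \<Rightarrow> nat set" where
  "layer C th D s p = layers C th D s p ! p"

definition coalition ::
  "nat set \<Rightarrow> (nat \<Rightarrow> real) \<Rightarrow> (nat \<Rightarrow> nat \<Rightarrow> real) \<Rightarrow> (nat \<Rightarrow> real) \<Rightarrow> nat set" where
  "coalition C th D s = (\<Union>p. layer C th D s p)"

definition S_left :: "(nat \<Rightarrow> 'a \<Rightarrow> real) \<Rightarrow> (nat \<Rightarrow> real \<Rightarrow> 'a) \<Rightarrow> nat \<Rightarrow> real \<Rightarrow> real" where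
  "S_left S x i t = Lim (at_left t) (\<lambda>r. S i (x i r))"

definition spiking_instants ::
  "nat set \<Rightarrow> (nat \<Rightarrow> real) \<Rightarrow> (nat \<Rightarrow> nat \<Rightarrow> real) \<Rightarrow> (nat \<Rightarrow> 'a \<Rightarrow> real) \<Rightarrow> (nat \<Rightarrow> real \<Rightarrow> 'a) \<Rightarrow> real set" where
  "spiking_instants C th D S x = {t. t > 0 \<and> layer C th D (\<lambda>j. S_left S x j t) 0 \<noteq> {}}"

definition cooperative :: "nat set \<Rightarrow> (nat \<Rightarrow> nat \<Rightarrow> real) \<Rightarrow> bool" where
  "cooperative C D \<longleftrightarrow> (\<forall>i\<in>C. \<forall>j\<in>C. i \<noteq> j \<longrightarrow> D i j \<ge> 0)"

definition large_enough :: "nat \<Rightarrow> (nat \<Rightarrow> real) \<Rightarrow> (nat \<Rightarrow> nat \<Rightarrow> real) \<Rightarrow> bool" where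
  "large_enough m th D \<longleftrightarrow>
     (\<forall>i\<in>{1..m}. \<forall>j\<in>{1..m}. i \<noteq> j \<longrightarrow> D i j > 0) \<and>
     sqrt (real m) \<ge> 1 + Max (th ` {1..m}) /
        Min ((\<lambda>(i, j). D i j) ` {(i, j). i \<in> {1..m} \<and> j \<in> {1..m} \<and> i \<noteq> j})"

end

theory Submission
  imports Defs
begin


lemma layers_length: "length (layers C th D s p) = Suc p"
  by (induct p) auto

lemma layer_0: "layer C th D s 0 = next_layer C th D s []"
  by (simp add: layer_def)

lemma layer_Suc: "layer C th D s (Suc p) = next_layer C th D s (layers C th D s p)"
  by (simp add: layer_def nth_append layers_length)

lemma layers_nth: "q \<le> p \<Longrightarrow> layers C th D s p ! q = layer C th D s q"
proof (induct p)
  case 0 then show ?case by (simp add: layer_def)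
next
  case (Suc p)
  show ?case
  proof (cases "q \<le> p")
    case True then show ?thesis using Suc by (simp add: nth_append layers_length)
  next
    case False then have "q = Suc p" using Suc by simp
    then show ?thesis by (simp add: layer_def)
  qed
qed

lemma layers_set: "set (layers C th D s p) = layer C th D s ` {..p}"
proof -
  have "set (layers C th D s p) = {layers C th D s p ! q | q. q < Suc p}"
    by (simp add: set_conv_nth layers_length)
  also have "\<dots> = layer C th D s ` {..p}"
    using layers_nth[of _ p C th D s] by (auto simp: less_Suc_eq_le)
  finally show ?thesis .
qed

lemma layer_sub: "layer C th D s p \<subseteq> C"
  by (cases p) (auto simp: layer_0 layer_Suc next_layer_def)

lemma layer_disj: "q < r \<Longrightarrow> layer C th D s q \<inter> layer C th D s r = {}"
proof -
  assume "q < r"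
  then obtain r' where r: "r = Suc r'" "q \<le> r'" by (cases r) auto
  then show ?thesis by (auto simp: layer_Suc next_layer_def layers_set)
qed

lemma sum_layers:
  assumes "finite C"
  shows "(\<Sum>k<length (layers C th D s p). \<Sum>i\<in>layers C th D s p ! k. g i)
       = (\<Sum>i\<in>(\<Union>q\<le>p. layer C th D s q). g i)"
proof -
  have "(\<Sum>k<length (layers C th D s p). \<Sum>i\<in>layers C th D s p ! k. g i)
      = (\<Sum>q\<le>p. \<Sum>i\<in>layer C th D s q. g i)"
    by (simp add: layers_length lessThan_Suc_atMost layers_nth)
  also have "\<dots> = (\<Sum>i\<in>(\<Union>q\<le>p. layer C th D s q). g i)"
    by (rule sum.UNION_disjoint[symmetric])
      (auto intro: finite_subset[OF layer_sub assms] dest: layer_disj[of _ _ C th D s]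
        simp: disjoint_iff linorder_neq_iff)
  finally show ?thesis .
qed

lemma next_layer_snoc_empty: "next_layer C th D s (ls @ [{}]) = next_layer C th D s ls"
  by (simp add: next_layer_def nth_append)

lemma layer_empty_Suc:
  assumes "layer C th D s q = {}" shows "layer C th D s (Suc q) = {}"
proof (cases q)
  case 0
  have "layers C th D s 0 = [] @ [{}]" using assms 0 by (simp add: layer_def)
  then have "layer C th D s (Suc q) = next_layer C th D s ([] @ [{}])" using 0 by (simp add: layer_Suc)
  then show ?thesis using assms 0 by (simp only: next_layer_snoc_empty layer_0)
next
  case (Suc q')
  have "layers C th D s q = layers C th D s q' @ [{}]"
    using assms Suc by (simp add: layer_Suc)
  then show ?thesis using assms Suc by (simp add: layer_Suc next_layer_snoc_empty)
qed

lemma layer_empty_ge: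
  assumes "layer C th D s q = {}" "q \<le> r" shows "layer C th D s r = {}"
  using assms(2)
proof (induct r)
  case 0 then show ?case using assms by simp
next
  case (Suc r)
  then show ?case using assms layer_empty_Suc by (cases "q = Suc r") auto
qed

lemma exists_empty_layer:
  assumes "finite C" shows "\<exists>q\<le>card C. layer C th D s q = {}"
proof (rule ccontr)
  assume "\<not> ?thesis"
  then have ne: "\<forall>q\<le>card C. layer C th D s q \<noteq> {}" by auto
  have fin: "\<forall>q. finite (layer C th D s q)"
    using finite_subset[OF layer_sub assms] by blast
  have "card (\<Union>q\<le>card C. layer C th D s q) = (\<Sum>q\<le>card C. card (layer C th D s q))"
    by (rule card_UN_disjoint) (auto simp: fin disjoint_iff linorder_neq_iff dest: layer_disj[of _ _ C th D s])
  also have "\<dots> \<ge> (\<Sum>q\<le>card C. 1)"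
    by (rule sum_mono) (use ne fin in \<open>auto simp: Suc_le_eq card_gt_0_iff\<close>)
  finally have "card (\<Union>q\<le>card C. layer C th D s q) \<ge> Suc (card C)" by simp
  moreover have "card (\<Union>q\<le>card C. layer C th D s q) \<le> card C"
    by (rule card_mono[OF assms]) (use layer_sub in blast)
  ultimately show False by simp
qed

lemma coalition_sub: "coalition C th D s \<subseteq> C"
  using layer_sub[of C th D s] by (auto simp: coalition_def)

lemma layer0_sub: "layer C th D s 0 \<subseteq> coalition C th D s"
  by (auto simp: coalition_def)

lemma layer0_eq: "layer C th D s 0 = {j\<in>C. th j \<le> s j}"
  by (simp add: layer_0 next_layer_def)

lemma coalition_out:
  assumes "finite C" "j \<in> C" "j \<notin> coalition C th D s"
  shows "s j + (\<Sum>i\<in>coalition C th D s. D i j) < th j"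
proof -
  obtain q where q: "layer C th D s q = {}" using exists_empty_layer[OF assms(1)] by blast
  have coal: "coalition C th D s = (\<Union>p\<le>q. layer C th D s p)"
  proof
    show "coalition C th D s \<subseteq> (\<Union>p\<le>q. layer C th D s p)"
      unfolding coalition_def
    proof
      fix y assume "y \<in> (\<Union>p. layer C th D s p)"
      then obtain p where "y \<in> layer C th D s p" by blast
      moreover have "p \<le> q" using calculation layer_empty_ge[OF q, of p] by (cases "q \<le> p") auto
      ultimately show "y \<in> (\<Union>p\<le>q. layer C th D s p)" by blast
    qed
  qed (auto simp: coalition_def)
  have "j \<notin> layer C th D s (Suc q)" using assms(3) by (auto simp: coalition_def)
  moreover have "j \<notin> \<Union>(set (layers C th D s q))"
    using assms(3) by (auto simp: layers_set coalition_def)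
  ultimately have "\<not> th j \<le> s j + (\<Sum>k<length (layers C th D s q). \<Sum>i\<in>layers C th D s q ! k. D i j)"
    using assms(2) by (auto simp: layer_Suc next_layer_def)
  then show ?thesis by (simp add: sum_layers[OF assms(1)] coal[symmetric])
qed



locale net =
  fixes m :: nat
    and X :: "nat \<Rightarrow> 'a::euclidean_space set"
    and f :: "nat \<Rightarrow> 'a \<Rightarrow> 'a"
    and S :: "nat \<Rightarrow> 'a \<Rightarrow> real"
    and gradS :: "nat \<Rightarrow> 'a \<Rightarrow> 'a"
    and U :: "nat \<Rightarrow> 'a set"
    and th v :: "nat \<Rightarrow> real"
    and D :: "nat \<Rightarrow> nat \<Rightarrow> real"
    and x :: "nat \<Rightarrow> real \<Rightarrow> 'a"
  assumes m2: "m \<ge> 2"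
    and S_C1: "\<forall>i\<in>{1..m}. open (U i) \<and> X i \<subseteq> U i \<and> continuous_on (U i) (gradS i) \<and>
                 (\<forall>y\<in>U i. (S i has_derivative (\<lambda>h. gradS i y \<bullet> h)) (at y))"
    and th_pos: "\<forall>i\<in>{1..m}. th i > 0"
    and v_pos: "\<forall>i\<in>{1..m}. v i > 0"
    and drift: "\<forall>i\<in>{1..m}. \<forall>y\<in>X i. S i y < th i \<longrightarrow> gradS i y \<bullet> f i y > v i"
    and coop: "cooperative {1..m} D"
    and large: "large_enough m th D"
    and init: "\<forall>i\<in>{1..m}. 0 \<le> S i (x i 0) \<and> S i (x i 0) < th i"
    and in_X: "\<forall>i\<in>{1..m}. \<forall>t\<ge>0. x i t \<in> X i"
    and loc_fin: "\<forall>b. finite (spiking_instants {1..m} th D S x \<inter> {..b})"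
    and flow: "\<forall>i\<in>{1..m}. \<forall>a b. 0 \<le> a \<and> a < b \<and> {a<..<b} \<inter> spiking_instants {1..m} th D S x = {} \<longrightarrow>
                 (\<forall>t\<in>{a..<b}. (x i has_vector_derivative f i (x i t)) (at t within {a..<b}))"
    and jump: "\<forall>t\<in>spiking_instants {1..m} th D S x. \<forall>j\<in>{1..m}.
                 (j \<in> coalition {1..m} th D (\<lambda>k. S_left S x k t) \<longrightarrow> S j (x j t) = 0) \<and>
                 (j \<notin> coalition {1..m} th D (\<lambda>k. S_left S x k t) \<longrightarrow>
                    S j (x j t) = S_left S x j t +
                      (\<Sum>i\<in>coalition {1..m} th D (\<lambda>k. S_left S x k t) - {j}. D i j))"
begin

abbreviation "C \<equiv> {1..m}"
abbreviation "SP \<equiv> spiking_instants {1..m} th D S x"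
abbreviation "y i t \<equiv> S i (x i t)"
abbreviation "sl i t \<equiv> S_left S x i t"
abbreviation "I t \<equiv> coalition {1..m} th D (\<lambda>k. S_left S x k t)"

lemma SP_pos: "t \<in> SP \<Longrightarrow> t > 0"
  by (simp add: spiking_instants_def)

lemma core:
  assumes a0: "0 \<le> a" and ab: "a < b" and nos: "{a<..<b} \<inter> SP = {}" and iC: "i \<in> C"
    and ya: "y i a < th i"
  shows "\<forall>s\<in>{a..<b}. y i s < th i \<and> y i a + v i * (s - a) \<le> y i s"
    and "y i a \<le> sl i b"
proof -
  define g where "g = (\<lambda>t. gradS i (x i t) \<bullet> f i (x i t))"
  have der: "((\<lambda>s. y i s) has_real_derivative g t) (at t within {a..<b})" if t: "t \<in> {a..<b}" for t
  proof -
    have xd: "(x i has_vector_derivative f i (x i t)) (at t within {a..<b})"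
      using flow iC a0 ab nos t by blast
    have "x i t \<in> U i" using in_X S_C1 iC t a0 by fastforce
    then have Sd: "(S i has_derivative (\<lambda>h. gradS i (x i t) \<bullet> h)) (at (x i t) within x i ` {a..<b})"
      using S_C1 iC has_derivative_at_withinI by blast
    have "((S i \<circ> x i) has_vector_derivative (gradS i (x i t) \<bullet> f i (x i t))) (at t within {a..<b})"
      by (rule vector_derivative_diff_chain_within[OF xd Sd])
    then show ?thesis
      by (simp add: has_real_derivative_iff_has_vector_derivative g_def o_def)
  qed
  have cont: "continuous_on {a..<b} (\<lambda>s. y i s)"
    using der DERIV_continuous continuous_on_eq_continuous_within by blast
  have derat: "((\<lambda>s. y i s) has_real_derivative g t) (at t)" if "t \<in> {a<..<b}" for t
  proof -
    have "((\<lambda>s. y i s) has_real_derivative g t) (at t within {a<..<b})"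
      by (rule DERIV_subset[OF der]) (use that in auto)
    then show ?thesis using that at_within_open[of t "{a<..<b}"] by simp
  qed
  have below: "y i s < th i" if s: "s \<in> {a..<b}" for s
  proof (rule ccontr)
    assume "\<not> ?thesis"
    then have ge: "th i \<le> y i s" by simp
    then have "s \<noteq> a" using ya by auto
    then have s': "s \<in> {a<..<b}" using s by auto
    have "isCont (\<lambda>s. y i s) s" using derat[OF s'] DERIV_isCont by blast
    then have "((\<lambda>s. y i s) \<longlongrightarrow> y i s) (at_left s)"
      by (simp add: isCont_def filterlim_at_split)
    then have "sl i s = y i s"
      unfolding S_left_def by (intro tendsto_Lim) auto
    then have "i \<in> layer C th D (\<lambda>k. sl k s) 0" using iC ge by (simp add: layer0_eq)
    then have "s \<in> SP" using s' a0 by (auto simp: spiking_instants_def)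
    then show False using nos s' by blast
  qed
  have incr: "y i s + v i * (s' - s) \<le> y i s'" if "a \<le> s" "s \<le> s'" "s' < b" for s s'
  proof -
    have "(\<lambda>t. y i t - v i * t) s \<le> (\<lambda>t. y i t - v i * t) s'"
    proof (rule DERIV_nonneg_imp_increasing_open[OF that(2)])
      fix t assume t: "s < t" "t < s'"
      then have tin: "t \<in> {a<..<b}" using that by auto
      have "x i t \<in> X i" using in_X iC tin a0 by auto
      then have "g t > v i" using drift iC below[of t] tin by (auto simp: g_def)
      moreover have "DERIV (\<lambda>t. y i t - v i * t) t :> g t - v i"
        using derat[OF tin] by (auto intro!: derivative_eq_intros)
      ultimately show "\<exists>r. DERIV (\<lambda>t. y i t - v i * t) t :> r \<and> 0 \<le> r"
        by (intro exI[of _ "g t - v i"]) auto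
    next
      have "continuous_on {s..s'} (\<lambda>s. y i s)"
        using cont by (rule continuous_on_subset) (use that in auto)
      then show "continuous_on {s..s'} (\<lambda>t. y i t - v i * t)"
        by (intro continuous_intros)
    qed
    then show ?thesis by (simp add: algebra_simps)
  qed
  show "\<forall>s\<in>{a..<b}. y i s < th i \<and> y i a + v i * (s - a) \<le> y i s"
    using below incr[of a] by auto
  define L where "L = (SUP s\<in>{a..<b}. y i s)"
  have bdd: "bdd_above ((\<lambda>s. y i s) ` {a..<b})"
    using below by (intro bdd_aboveI[of _ "th i"]) (auto simp: less_imp_le)
  have vpos: "v i > 0" using v_pos iC by auto
  have "((\<lambda>s. y i s) \<longlongrightarrow> L) (at_left b)"
  proof (rule increasing_tendsto)
    show "\<forall>\<^sub>F n in at_left b. y i n \<le> L"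
      using eventually_at_left_real[OF ab]
      by (rule eventually_mono) (auto simp: L_def intro!: cSUP_upper bdd)
  next
    fix z assume "z < L"
    then obtain s where s: "s \<in> {a..<b}" "z < y i s"
      using less_cSUP_iff[OF _ bdd] ab by (auto simp: L_def)
    have "s < b" using s by auto
    show "\<forall>\<^sub>F n in at_left b. z < y i n"
      using eventually_at_left_real[OF \<open>s < b\<close>]
    proof (rule eventually_mono)
      fix t assume "t \<in> {s<..<b}"
      then have "y i s + v i * (t - s) \<le> y i t" using incr[of s t] s by auto
      moreover have "v i * (t - s) \<ge> 0" using vpos \<open>t \<in> {s<..<b}\<close> by auto
      ultimately show "z < y i t" using s by linarith
    qed
  qed
  then have "sl i b = L" unfolding S_left_def by (intro tendsto_Lim) auto
  moreover have "y i a \<le> L" unfolding L_def using ab by (intro cSUP_upper bdd) auto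
  ultimately show "y i a \<le> sl i b" by simp
qed

lemma move:
  assumes a0: "0 \<le> a" and aT: "a \<le> T" and nos: "{a<..T} \<inter> SP = {}" and iC: "i \<in> C"
    and ya: "y i a < th i"
  shows "y i a + v i * (T - a) \<le> y i T \<and> y i T < th i"
proof (cases "a = T")
  case True then show ?thesis using ya by simp
next
  case False
  then have aT': "a < T" using aT by simp
  have "\<exists>c>T. c \<le> T + 1 \<and> {T<..<c} \<inter> SP = {}"
  proof (cases "SP \<inter> {..T+1} \<inter> {T<..} = {}")
    case True then show ?thesis by (intro exI[of _ "T+1"]) auto
  next
    case False
    define G where "G = SP \<inter> {..T+1} \<inter> {T<..}"
    have fG: "finite G" using loc_fin by (auto simp: G_def)
    have "G \<noteq> {}" using False by (simp add: G_def)
    then have "Min G \<in> G" using fG by (intro Min_in)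
    then have M': "Min G \<in> SP" "T < Min G" "Min G \<le> T+1" by (auto simp: G_def)
    have "\<forall>s\<in>SP. T < s \<and> s < Min G \<longrightarrow> False"
    proof (intro ballI impI)
      fix s assume "s \<in> SP" "T < s \<and> s < Min G"
      moreover then have "s \<in> G" using \<open>Min G \<in> G\<close> by (auto simp: G_def)
      ultimately show False using Min_le[OF fG] by force
    qed
    then show ?thesis using M' by (intro exI[of _ "Min G"]) auto
  qed
  then obtain c where c: "c > T" "{T<..<c} \<inter> SP = {}" by blast
  have "{a<..<c} \<inter> SP = {}"
  proof -
    have "{a<..<c} \<subseteq> {a<..T} \<union> {T<..<c}" by auto
    then show ?thesis using nos c by blast
  qed
  then show ?thesis using core(1)[OF a0 _ _ iC ya, of c] aT' c by auto
qed

lemma prev: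
  assumes "t \<in> SP"
  shows "\<exists>a. 0 \<le> a \<and> a < t \<and> {a<..<t} \<inter> SP = {} \<and> SP \<inter> {..a} = SP \<inter> {..<t}"
proof (cases "SP \<inter> {..<t} = {}")
  case True
  then show ?thesis using assms SP_pos by (intro exI[of _ 0]) fastforce
next
  case False
  define E where "E = SP \<inter> {..<t}"
  have fE: "finite E" by (rule finite_subset[OF _ loc_fin[rule_format, of t]]) (auto simp: E_def)
  have "E \<noteq> {}" using False by (simp add: E_def)
  then have M: "Max E \<in> E" using fE by (intro Max_in)
  have le: "s \<le> Max E" if "s \<in> E" for s using fE that by simp
  have Mp: "Max E \<in> SP" "Max E < t" using M by (auto simp: E_def)
  then have "0 \<le> Max E" using SP_pos by fastforce
  moreover have "{Max E<..<t} \<inter> SP = {}"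
  proof (rule ccontr)
    assume "\<not> ?thesis"
    then obtain s where "s \<in> SP" "Max E < s" "s < t" by auto
    then show False using le[of s] by (auto simp: E_def)
  qed
  moreover have "SP \<inter> {..Max E} = SP \<inter> {..<t}"
  proof
    show "SP \<inter> {..Max E} \<subseteq> SP \<inter> {..<t}" using Mp by auto
    show "SP \<inter> {..<t} \<subseteq> SP \<inter> {..Max E}" using le by (auto simp: E_def)
  qed
  ultimately show ?thesis using Mp by blast
qed

definition dmin where "dmin = Min ((\<lambda>(i, j). D i j) ` {(i, j). i \<in> C \<and> j \<in> C \<and> i \<noteq> j})"
definition Th where "Th = Max (th ` C)"

lemma pairs_fin: "finite {(i, j). i \<in> C \<and> j \<in> C \<and> i \<noteq> j}"
  by (rule finite_subset[of _ "C \<times> C"]) auto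

lemma D_ge: "i \<in> C \<Longrightarrow> j \<in> C \<Longrightarrow> i \<noteq> j \<Longrightarrow> dmin \<le> D i j"
  unfolding dmin_def using pairs_fin by (intro Min_le) auto

lemma dmin_pos: "dmin > 0"
proof -
  have "(1,2) \<in> {(i, j). i \<in> C \<and> j \<in> C \<and> i \<noteq> j}" using m2 by auto
  then have ne: "{(i, j). i \<in> C \<and> j \<in> C \<and> i \<noteq> j} \<noteq> {}" by blast
  have "dmin \<in> (\<lambda>(i, j). D i j) ` {(i, j). i \<in> C \<and> j \<in> C \<and> i \<noteq> j}"
    unfolding dmin_def using pairs_fin ne by (intro Min_in) auto
  then show ?thesis using large by (auto simp: large_enough_def)
qed

lemma th_le: "i \<in> C \<Longrightarrow> th i \<le> Th"
  unfolding Th_def by (intro Max_ge) auto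

lemma Th_pos: "Th > 0"
proof -
  have "1 \<in> C" using m2 by auto
  then show ?thesis using th_le[of 1] th_pos by fastforce
qed

lemma m_big: "real m * dmin > 2 * Th"
proof -
  define K where "K = Th / dmin"
  have K: "K > 0" using Th_pos dmin_pos by (simp add: K_def)
  have "sqrt (real m) \<ge> 1 + K" using large by (simp add: large_enough_def K_def dmin_def Th_def)
  then have "(sqrt (real m))^2 \<ge> (1 + K)^2" using K by (intro power_mono) auto
  then have "real m \<ge> (1 + K)^2" by simp
  then have "real m > 2 * K" using K by (simp add: power2_eq_square algebra_simps) (smt (verit) mult_pos_pos)
  then show ?thesis using dmin_pos by (simp add: K_def field_simps)
qed

definition w where "w i e = (if i \<in> I e then - th i else dmin * real (card (I e)))"

lemma sum_I_ge:
  assumes "i \<in> C" "i \<notin> I e"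
  shows "dmin * real (card (I e)) \<le> (\<Sum>k\<in>I e. D k i)"
proof -
  have "of_nat (card (I e)) * dmin \<le> (\<Sum>k\<in>I e. D k i)"
    by (rule sum_bounded_below) (use assms coalition_sub D_ge in blast)
  then show ?thesis by (simp add: mult.commute)
qed

lemma inv_n:
  "\<forall>T. 0 \<le> T \<longrightarrow> card (SP \<inter> {..T}) = n \<longrightarrow>
     (\<forall>i\<in>C. 0 \<le> y i T \<and> y i T < th i \<and> (\<Sum>e\<in>SP\<inter>{..T}. w i e) \<le> y i T)"
proof (induct n rule: less_induct)
  case (less n)
  show ?case
  proof (intro allI impI)
    fix T :: real assume T0: "0 \<le> T" and cn: "card (SP \<inter> {..T}) = n"
    show "\<forall>i\<in>C. 0 \<le> y i T \<and> y i T < th i \<and> (\<Sum>e\<in>SP\<inter>{..T}. w i e) \<le> y i T"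
    proof (cases "SP \<inter> {..T} = {}")
      case True
      then have nos: "{0<..T} \<inter> SP = {}" by auto
      show ?thesis
      proof
        fix i assume iC: "i \<in> C"
        have "y i 0 + v i * (T - 0) \<le> y i T \<and> y i T < th i"
          using move[of 0 T i] nos iC init T0 by auto
        moreover have "v i * (T - 0) \<ge> 0" using v_pos iC T0 by (simp add: less_imp_le)
        moreover have "0 \<le> y i 0" using init iC by blast
        ultimately show "0 \<le> y i T \<and> y i T < th i \<and> (\<Sum>e\<in>SP\<inter>{..T}. w i e) \<le> y i T"
          using True by auto
      qed
    next
      case False
      have fin: "finite (SP \<inter> {..T})" using loc_fin by blast
      define t where "t = Max (SP \<inter> {..T})"
      have "t \<in> SP \<inter> {..T}" unfolding t_def using fin False by (intro Max_in)
      then have t: "t \<in> SP" "t \<le> T" by auto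
      have tmax: "s \<le> t" if "s \<in> SP" "s \<le> T" for s unfolding t_def using fin that by simp
      obtain a where a: "0 \<le> a" "a < t" "{a<..<t} \<inter> SP = {}" "SP \<inter> {..a} = SP \<inter> {..<t}"
        using prev[OF t(1)] by blast
      have Eeq: "SP \<inter> {..T} = insert t (SP \<inter> {..a})"
        using a(4) t tmax by fastforce
      have tn: "t \<notin> SP \<inter> {..a}" using a(2) by auto
      have fa: "finite (SP \<inter> {..a})" using loc_fin by blast
      have "card (SP \<inter> {..a}) < n" using cn Eeq tn fa by simp
      then have IH: "\<forall>i\<in>C. 0 \<le> y i a \<and> y i a < th i \<and> (\<Sum>e\<in>SP\<inter>{..a}. w i e) \<le> y i a"
        using less a(1) by blast
      have nos2: "{t<..T} \<inter> SP = {}" using tmax by force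
      show ?thesis
      proof
        fix i assume iC: "i \<in> C"
        have ia: "0 \<le> y i a" "y i a < th i" "(\<Sum>e\<in>SP\<inter>{..a}. w i e) \<le> y i a" using IH iC by auto
        have sl_ge: "y i a \<le> sl i t" using core(2)[OF a(1) a(2) a(3) iC ia(2)] .
        have sumE: "(\<Sum>e\<in>SP\<inter>{..T}. w i e) = w i t + (\<Sum>e\<in>SP\<inter>{..a}. w i e)"
          using Eeq tn fa by simp
        have thp: "th i > 0" using th_pos iC by auto
        have yt: "0 \<le> y i t \<and> y i t < th i \<and> (\<Sum>e\<in>SP\<inter>{..T}. w i e) \<le> y i t"
        proof (cases "i \<in> I t")
          case True
          have "y i t = 0" using jump t(1) iC True by blast
          moreover have "w i t = - th i" using True by (simp add: w_def)
          ultimately show ?thesis using sumE ia thp by linarith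
        next
          case False
          have "I t - {i} = I t" using False by auto
          then have yt: "y i t = sl i t + (\<Sum>k\<in>I t. D k i)" using jump t(1) iC False by metis
          have lt: "sl i t + (\<Sum>k\<in>I t. D k i) < th i"
            using coalition_out[of C i th D "\<lambda>k. sl k t"] iC False by simp
          have ge: "dmin * real (card (I t)) \<le> (\<Sum>k\<in>I t. D k i)" by (rule sum_I_ge[OF iC False])
          have "w i t = dmin * real (card (I t))" using False by (simp add: w_def)
          moreover have "dmin * real (card (I t)) \<ge> 0" using dmin_pos by simp
          ultimately show ?thesis using sumE ia yt lt ge sl_ge by linarith
        qed
        have "y i t + v i * (T - t) \<le> y i T \<and> y i T < th i"
          using move[OF _ t(2) nos2 iC] yt SP_pos[OF t(1)] by auto
        moreover have "v i * (T - t) \<ge> 0" using v_pos iC t(2) by (simp add: less_imp_le)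
        ultimately show "0 \<le> y i T \<and> y i T < th i \<and> (\<Sum>e\<in>SP\<inter>{..T}. w i e) \<le> y i T"
          using yt by linarith
      qed
    qed
  qed
qed

lemma inv:
  "0 \<le> T \<Longrightarrow> i \<in> C \<Longrightarrow> 0 \<le> y i T \<and> y i T < th i \<and> (\<Sum>e\<in>SP\<inter>{..T}. w i e) \<le> y i T"
  using inv_n by blast

lemma sl_nonneg: "t \<in> SP \<Longrightarrow> j \<in> C \<Longrightarrow> 0 \<le> sl j t"
proof -
  assume t: "t \<in> SP" and jC: "j \<in> C"
  obtain a where a: "0 \<le> a" "a < t" "{a<..<t} \<inter> SP = {}" using prev[OF t] by blast
  have "0 \<le> y j a" "y j a < th j" using inv[OF a(1) jC] by auto
  then show ?thesis using core(2)[OF a jC] by linarith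
qed

lemma I_ne: "t \<in> SP \<Longrightarrow> I t \<noteq> {}"
  using layer0_sub[of C th D "\<lambda>k. sl k t"] by (auto simp: spiking_instants_def)

lemma I_fin: "finite (I t)"
  by (rule finite_subset[OF coalition_sub finite_atLeastAtMost])

lemma small:
  assumes t: "t \<in> SP" and nC: "I t \<noteq> C"
  shows "dmin * real (card (I t)) < Th"
proof (rule ccontr)
  assume "\<not> ?thesis"
  then have big: "Th \<le> dmin * real (card (I t))" by simp
  obtain j where j: "j \<in> C" "j \<notin> I t" using nC coalition_sub by blast
  have "sl j t + (\<Sum>k\<in>I t. D k j) < th j"
    using coalition_out[of C j th D "\<lambda>k. sl k t"] j by simp
  moreover have "dmin * real (card (I t)) \<le> (\<Sum>k\<in>I t. D k j)" by (rule sum_I_ge[OF j])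
  moreover have "0 \<le> sl j t" using sl_nonneg[OF t j(1)] .
  moreover have "th j \<le> Th" using th_le[OF j(1)] .
  ultimately show False using big by linarith
qed

lemma SP_infinite: "infinite SP"
proof
  assume fin: "finite SP"
  define T0 where "T0 = (if SP = {} then 0 else Max SP)"
  have T0: "0 \<le> T0" using fin SP_pos by (auto simp: T0_def intro: less_imp_le Max_in)
  have after: "s \<le> T0" if "s \<in> SP" for s using fin that by (auto simp: T0_def)
  have oneC: "1 \<in> C" using m2 by auto
  have vp: "v 1 > 0" and tp: "th 1 > 0" using v_pos th_pos oneC by auto
  define T where "T = T0 + th 1 / v 1"
  have TT: "T0 \<le> T" using vp tp by (simp add: T_def)
  have nos: "{T0<..T} \<inter> SP = {}" using after by force
  have i0: "0 \<le> y 1 T0" "y 1 T0 < th 1" using inv[OF T0 oneC] by auto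
  have "y 1 T0 + v 1 * (T - T0) \<le> y 1 T \<and> y 1 T < th 1" by (rule move[OF T0 TT nos oneC i0(2)])
  moreover have "v 1 * (T - T0) = th 1" using vp by (simp add: T_def)
  ultimately show False using i0 by linarith
qed

definition W where "W e = (\<Sum>i\<in>C. w i e)"

lemma W_split:
  "W e = (\<Sum>i\<in>I e. - th i) + real (m - card (I e)) * (dmin * real (card (I e)))"
proof -
  have "W e = (\<Sum>i\<in>C \<inter> {i. i \<in> I e}. - th i) + (\<Sum>i\<in>C \<inter> - {i. i \<in> I e}. dmin * real (card (I e)))"
    unfolding W_def w_def by (rule sum.If_cases) simp
  moreover have "C \<inter> {i. i \<in> I e} = I e" using coalition_sub by blast
  moreover have "C \<inter> - {i. i \<in> I e} = C - I e" by blast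
  moreover have "card (C - I e) = m - card (I e)"
    using card_Diff_subset[OF I_fin coalition_sub] by simp
  ultimately show ?thesis by simp
qed

lemma W_lb1: "W e \<ge> - real m * Th"
proof -
  have k: "card (I e) \<le> m" using card_mono[OF _ coalition_sub[of C th D "\<lambda>k. sl k e"]] by simp
  have "(\<Sum>i\<in>I e. th i) \<le> of_nat (card (I e)) * Th"
    by (rule sum_bounded_above) (use coalition_sub th_le in blast)
  moreover have "real (m - card (I e)) * (dmin * real (card (I e))) \<ge> 0" using dmin_pos by simp
  moreover have "of_nat (card (I e)) * Th \<le> real m * Th" using k Th_pos by simp
  ultimately show ?thesis unfolding W_split by (simp add: sum_negf)
qed

lemma W_lb2:
  assumes t: "t \<in> SP" and nC: "I t \<noteq> C"
  shows "W t \<ge> real m * dmin - 2 * Th"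
proof -
  define K where "K = real (card (I t))"
  have k: "card (I t) \<le> m" using card_mono[OF _ coalition_sub[of C th D "\<lambda>k. sl k t"]] by simp
  have K1: "K \<ge> 1" using I_ne[OF t] I_fin by (simp add: K_def Suc_le_eq card_gt_0_iff)
  have sm: "dmin * K < Th" using small[OF t nC] by (simp add: K_def)
  have "(\<Sum>i\<in>I t. th i) \<le> K * Th"
    unfolding K_def by (rule sum_bounded_above) (use coalition_sub th_le in blast)
  then have "W t \<ge> - K * Th + (real m - K) * (dmin * K)"
    unfolding W_split using k by (simp add: sum_negf K_def of_nat_diff)
  also have "- K * Th + (real m - K) * (dmin * K) = K * (real m * dmin - K * dmin - Th)"
    by (simp add: algebra_simps)
  also have "\<dots> \<ge> 1 * (real m * dmin - K * dmin - Th)"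
    using K1 sm m_big by (intro mult_right_mono) (auto simp: mult.commute)
  finally show ?thesis using sm by (simp add: mult.commute)
qed

lemma main: "infinite {t\<in>SP. I t = C}"
proof
  define G where "G = {t\<in>SP. I t = C}"
  assume "finite {t\<in>SP. I t = C}"
  then have fG: "finite G" by (simp add: G_def)
  define g where "g = card G"
  define \<delta> where "\<delta> = real m * dmin - 2 * Th"
  have dp: "\<delta> > 0" using m_big by (simp add: \<delta>_def mult.commute)
  define N where "N = nat (ceiling (real m * Th * (real g + 1) / \<delta>)) + g + 1"
  have Nb: "real N > real m * Th * (real g + 1) / \<delta> + real g"
    unfolding N_def by linarith
  obtain F where F: "F \<subseteq> SP" "finite F" "card F = N"
    using infinite_arbitrarily_large[OF SP_infinite] by blast
  have "F \<noteq> {}" using F N_def by auto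
  define T where "T = Max F"
  have "T \<in> F" using F \<open>F \<noteq> {}\<close> by (simp add: T_def)
  then have T0: "0 \<le> T" using F SP_pos by (auto intro: less_imp_le)
  define E where "E = SP \<inter> {..T}"
  have fE: "finite E" using loc_fin by (simp add: E_def)
  have "F \<subseteq> E" using F by (auto simp: E_def T_def)
  then have cE: "N \<le> card E" using card_mono[OF fE \<open>F \<subseteq> E\<close>] F(3) by simp
  have Cne: "C \<noteq> {}" using m2 by auto
  have "(\<Sum>i\<in>C. \<Sum>e\<in>E. w i e) < (\<Sum>i\<in>C. Th)"
  proof (rule sum_strict_mono[OF _ Cne])
    fix i assume iC: "i \<in> C"
    show "(\<Sum>e\<in>E. w i e) < Th" using inv[OF T0 iC] th_le[OF iC] by (simp add: E_def)
  qed simp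
  moreover have "(\<Sum>i\<in>C. \<Sum>e\<in>E. w i e) = (\<Sum>e\<in>E. W e)"
    unfolding W_def by (rule sum.swap)
  ultimately have lt: "(\<Sum>e\<in>E. W e) < real m * Th"
    by simp
  have "(\<Sum>e\<in>E. W e) = (\<Sum>e\<in>E \<inter> G. W e) + (\<Sum>e\<in>E - G. W e)"
    by (rule sum.Int_Diff[OF fE])
  moreover have "(\<Sum>e\<in>E \<inter> G. W e) \<ge> (\<Sum>e\<in>E \<inter> G. - real m * Th)"
    by (rule sum_mono) (rule W_lb1)
  moreover have "(\<Sum>e\<in>E - G. W e) \<ge> (\<Sum>e\<in>E - G. \<delta>)"
    by (rule sum_mono) (use W_lb2 in \<open>auto simp: \<delta>_def E_def G_def\<close>)
  ultimately have "real (card (E \<inter> G)) * (- real m * Th) + real (card (E - G)) * \<delta> < real m * Th"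
    using lt by simp
  moreover have "card (E \<inter> G) \<le> g" unfolding g_def by (rule card_mono[OF fG]) auto
  moreover have "card E \<le> card (E - G) + g"
  proof -
    have "card E \<le> card ((E - G) \<union> G)" by (rule card_mono) (use fE fG in auto)
    also have "\<dots> \<le> card (E - G) + card G" by (rule card_Un_le)
    finally show ?thesis by (simp add: g_def)
  qed
  ultimately have A: "- real g * (real m * Th) + (real N - real g) * \<delta> < real m * Th"
  proof -
    assume h1: "real (card (E \<inter> G)) * (- real m * Th) + real (card (E - G)) * \<delta> < real m * Th"
      and h2: "card (E \<inter> G) \<le> g" and h3: "card E \<le> card (E - G) + g"
    have mt: "real m * Th \<ge> 0" using Th_pos by simp
    have "real (card (E \<inter> G)) * (real m * Th) \<le> real g * (real m * Th)"
      using h2 mt by (intro mult_right_mono) auto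
    moreover have "(real N - real g) * \<delta> \<le> real (card (E - G)) * \<delta>"
      using h3 cE dp by (intro mult_right_mono) auto
    ultimately show ?thesis using h1 by (simp add: algebra_simps)
  qed
  from Nb have "(real N - real g) * \<delta> > real m * Th * (real g + 1)"
    using dp by (simp add: field_simps)
  with A show False by (simp add: algebra_simps)
qed

end

theorem theorem1:
  fixes m :: nat
    and X :: "nat \<Rightarrow> 'a::euclidean_space set"
    and f :: "nat \<Rightarrow> 'a \<Rightarrow> 'a"
    and S :: "nat \<Rightarrow> 'a \<Rightarrow> real"
    and gradS :: "nat \<Rightarrow> 'a \<Rightarrow> 'a"
    and U :: "nat \<Rightarrow> 'a set"
    and th v :: "nat \<Rightarrow> real"
    and D :: "nat \<Rightarrow> nat \<Rightarrow> real"
    and x :: "nat \<Rightarrow> real \<Rightarrow> 'a"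
  assumes m2: "m \<ge> 2"
    and X_compact: "\<forall>i\<in>{1..m}. compact (X i)"
    and f_cont: "\<forall>i\<in>{1..m}. continuous_on (X i) (f i)"
    and S_C1: "\<forall>i\<in>{1..m}. open (U i) \<and> X i \<subseteq> U i \<and> continuous_on (U i) (gradS i) \<and>
                 (\<forall>y\<in>U i. (S i has_derivative (\<lambda>h. gradS i y \<bullet> h)) (at y))"
    and th_pos: "\<forall>i\<in>{1..m}. th i > 0"
    and v_pos: "\<forall>i\<in>{1..m}. v i > 0"
    and drift: "\<forall>i\<in>{1..m}. \<forall>y\<in>X i. S i y < th i \<longrightarrow> gradS i y \<bullet> f i y > v i"
    and coop: "cooperative {1..m} D"
    and large: "large_enough m th D"
    and init: "\<forall>i\<in>{1..m}. 0 \<le> S i (x i 0) \<and> S i (x i 0) < th i"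
    and in_X: "\<forall>i\<in>{1..m}. \<forall>t\<ge>0. x i t \<in> X i"
    and loc_fin: "\<forall>b. finite (spiking_instants {1..m} th D S x \<inter> {..b})"
    and flow: "\<forall>i\<in>{1..m}. \<forall>a b. 0 \<le> a \<and> a < b \<and> {a<..<b} \<inter> spiking_instants {1..m} th D S x = {} \<longrightarrow>
                 (\<forall>t\<in>{a..<b}. (x i has_vector_derivative f i (x i t)) (at t within {a..<b}))"
    and jump: "\<forall>t\<in>spiking_instants {1..m} th D S x. \<forall>j\<in>{1..m}.
                 (j \<in> coalition {1..m} th D (\<lambda>k. S_left S x k t) \<longrightarrow> S j (x j t) = 0) \<and>
                 (j \<notin> coalition {1..m} th D (\<lambda>k. S_left S x k t) \<longrightarrow>
                    S j (x j t) = S_left S x j t +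
                      (\<Sum>i\<in>coalition {1..m} th D (\<lambda>k. S_left S x k t) - {j}. D i j))"
  shows "infinite {t\<in>spiking_instants {1..m} th D S x.
                     coalition {1..m} th D (\<lambda>k. S_left S x k t) = {1..m}}"
  proof -
  interpret net m X f S gradS U th v D x
    by (unfold_locales; fact)
  show ?thesis by (rule main)
qed

end
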